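(* Let $(S,Z,A,\tilde Y)$ be jointly distributed random variables, where $S$ is a state distributed according to $d_\pi$, $Z\in\{1,\dots,N\}$ is a sampling index, $A$ takes values in a finite action set, and $\tilde Y\in\{1,\dots,B\}$ is a discretized reward signal. For each state $s$ put $\pi_i^s(a):=P(A=a\mid Z=i,S=s)$, $w_i(s):=P(Z=i\mid S=s)$ and $\bar\pi^s(a):=\sum_{i=1}^Nw_i(s)\pi_i^s(a)=P(A=a\mid S=s)$. Consider the three divergences $$\mathrm{JSD}_{w(s)}(\{\pi_i^s\}):=\sum_iw_i(s)D_{KL}(\pi_i^s\,\|\,\bar\pi^s),\quad D_2(Z\mid s):=\sum_iw_i(s)\|\pi_i^s-\bar\pi^s\|_2^2,\quad D_{TV}(Z\mid s):=\sum_iw_i(s)\,TV(\pi_i^s,\bar\pi^s)^2,$$ and for each of them define $\mathrm{Expr}:=\mathbb{E}_{S\sim d_\pi}[\text{Divergence}]$. If $I(A;Z\mid\tilde Y,S)=0$, then for each of these three divergences $$\mathrm{Expr}\le O\big(I(A;\tilde Y\mid S)\big),$$ i.e. there is an absolute constant $C$ (not depending on the distributions) with $\mathrm{Expr}\le C\,I(A;\tilde Y\mid S)$.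
   Context: $TV(p,q)=\frac12\sum_a|p(a)-q(a)|$ is total variation distance; $D_{KL}$ is Kullback–Leibler divergence and mutual informations use the natural logarithm. $I(A;\tilde Y\mid S)=\mathbb{E}_{s\sim d_\pi}[I(A;\tilde Y\mid S=s)]$ (called MI-TET), where $d_\pi$ is the state distribution visited by the policy. $Z$ indexes the latest $N$ samplings of the policy, so $\mathrm{Expr}$ measures the spread among sampled action distributions. *)

theory Defs
  imports "HOL-Probability.Probability"
begin

type_synonym sample = "nat \<times> nat \<times> nat \<times> nat"

definition sS :: "sample \<Rightarrow> nat" where "sS x = fst x"
definition zZ :: "sample \<Rightarrow> nat" where "zZ x = fst (snd x)"
definition aA :: "sample \<Rightarrow> nat" where "aA x = fst (snd (snd x))"
definition yY :: "sample \<Rightarrow> nat" where "yY x = snd (snd (snd x))"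

definition mutual_info :: "('u \<times> 'v) pmf \<Rightarrow> real" where
  "mutual_info Q = (\<Sum>(u, v)\<in>set_pmf Q.
      pmf Q (u, v) * ln (pmf Q (u, v) / (pmf (map_pmf fst Q) u * pmf (map_pmf snd Q) v)))"

definition mi_A_Y_given_S :: "sample pmf \<Rightarrow> real" where
  "mi_A_Y_given_S P = measure_pmf.expectation (map_pmf sS P)
     (\<lambda>s. mutual_info (map_pmf (\<lambda>x. (aA x, yY x)) (cond_pmf P {x. sS x = s})))"

definition mi_A_Z_given_YS :: "sample pmf \<Rightarrow> real" where
  "mi_A_Z_given_YS P = measure_pmf.expectation (map_pmf (\<lambda>x. (sS x, yY x)) P)
     (\<lambda>(s, y). mutual_info (map_pmf (\<lambda>x. (aA x, zZ x)) (cond_pmf P {x. sS x = s \<and> yY x = y})))"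

definition wt :: "sample pmf \<Rightarrow> nat \<Rightarrow> nat \<Rightarrow> real" where
  "wt P s i = pmf (map_pmf zZ (cond_pmf P {x. sS x = s})) i"

definition pol :: "sample pmf \<Rightarrow> nat \<Rightarrow> nat \<Rightarrow> nat \<Rightarrow> real" where
  "pol P s i a = pmf (map_pmf aA (cond_pmf P {x. sS x = s \<and> zZ x = i})) a"

definition mixpol :: "sample pmf \<Rightarrow> nat \<Rightarrow> nat \<Rightarrow> nat \<Rightarrow> real" where
  "mixpol P N s a = (\<Sum>i\<in>{1..N}. wt P s i * pol P s i a)"

definition kl_on :: "'a set \<Rightarrow> ('a \<Rightarrow> real) \<Rightarrow> ('a \<Rightarrow> real) \<Rightarrow> real" where
  "kl_on X p q = (\<Sum>a\<in>X. p a * ln (p a / q a))"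

definition tv_on :: "'a set \<Rightarrow> ('a \<Rightarrow> real) \<Rightarrow> ('a \<Rightarrow> real) \<Rightarrow> real" where
  "tv_on X p q = (1 / 2) * (\<Sum>a\<in>X. \<bar>p a - q a\<bar>)"

definition JSD_div :: "sample pmf \<Rightarrow> nat \<Rightarrow> nat set \<Rightarrow> nat \<Rightarrow> real" where
  "JSD_div P N X s = (\<Sum>i\<in>{1..N}. wt P s i * kl_on X (pol P s i) (mixpol P N s))"

definition D2_div :: "sample pmf \<Rightarrow> nat \<Rightarrow> nat set \<Rightarrow> nat \<Rightarrow> real" where
  "D2_div P N X s = (\<Sum>i\<in>{1..N}. wt P s i * (\<Sum>a\<in>X. (pol P s i a - mixpol P N s a)\<^sup>2))"

definition DTV_div :: "sample pmf \<Rightarrow> nat \<Rightarrow> nat set \<Rightarrow> nat \<Rightarrow> real" where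
  "DTV_div P N X s = (\<Sum>i\<in>{1..N}. wt P s i * (tv_on X (pol P s i) (mixpol P N s))\<^sup>2)"

definition Expr :: "sample pmf \<Rightarrow> (nat \<Rightarrow> real) \<Rightarrow> real" where
  "Expr P D = measure_pmf.expectation (map_pmf sS P) D"

end

theory Submission
  imports Defs "HOL-Analysis.Analysis"
begin

lemma hell_term:
  fixes u v :: real assumes "u > 0" "v > 0"
  shows "2 * u^2 - 2 * u * v \<le> u^2 * ln (u^2/v^2)"
proof -
  have "ln (v/u) \<le> v/u - 1" using assms by (intro ln_le_minus_one) auto
  moreover have "ln (u^2/v^2) = - 2 * ln (v/u)" using assms
    by (simp add: ln_div ln_mult power2_eq_square)
  ultimately have "u^2 * ln (u^2/v^2) \<ge> -2 * u^2 * (v/u - 1)"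
    using assms by (simp add: mult_left_mono)
  moreover have "-2 * u^2 * (v/u - 1) = 2 * u^2 - 2 * u * v" using assms by (simp add: field_simps power2_eq_square)
  ultimately show ?thesis by simp
qed

lemma hell_term2:
  fixes p q :: real assumes "p \<ge> 0" "q \<ge> 0" "q = 0 \<longrightarrow> p = 0"
  shows "2 * p - 2 * sqrt p * sqrt q \<le> p * ln (p/q)"
proof (cases "p = 0")
  case True then show ?thesis by simp
next
  case False
  then have "p > 0" "q > 0" using assms by auto
  then show ?thesis using hell_term[of "sqrt p" "sqrt q"] by simp
qed

lemma kl_hell:
  fixes p q :: "'a \<Rightarrow> real"
  assumes "finite X" "\<And>a. a \<in> X \<Longrightarrow> p a \<ge> 0" "\<And>a. a \<in> X \<Longrightarrow> q a \<ge> 0"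
    "sum p X = 1" "sum q X = 1" "\<And>a. a \<in> X \<Longrightarrow> q a = 0 \<Longrightarrow> p a = 0"
  shows "(\<Sum>a\<in>X. (sqrt (p a) - sqrt (q a))^2) \<le> kl_on X p q"
proof -
  have "(\<Sum>a\<in>X. (sqrt (p a) - sqrt (q a))^2) = (\<Sum>a\<in>X. p a + q a - 2 * sqrt (p a) * sqrt (q a))"
    using assms(2,3) by (intro sum.cong) (auto simp: power2_diff)
  also have "\<dots> = (\<Sum>a\<in>X. 2 * p a - 2 * sqrt (p a) * sqrt (q a))"
    using assms(4,5) by (simp add: sum.distrib sum_subtractf flip: sum_distrib_left)
  also have "\<dots> \<le> kl_on X p q" unfolding kl_on_def
    using assms by (intro sum_mono hell_term2) auto
  finally show ?thesis .
qed

lemma aux_le: "(A::real) + D = 2 * (P + Q) \<Longrightarrow> 0 \<le> D \<Longrightarrow> A \<le> 2 * (P + Q)" by linarith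
lemma aux_le2: "(P::real) \<le> 1 \<Longrightarrow> Q \<le> 1 \<Longrightarrow> 2 * (P + Q) \<le> 4" by (simp add: algebra_simps)
lemma d2_kl:
  fixes p q :: "'a \<Rightarrow> real"
  assumes "finite X" "\<And>a. a \<in> X \<Longrightarrow> p a \<ge> 0" "\<And>a. a \<in> X \<Longrightarrow> q a \<ge> 0"
    "sum p X = 1" "sum q X = 1" "\<And>a. a \<in> X \<Longrightarrow> q a = 0 \<Longrightarrow> p a = 0"
  shows "(\<Sum>a\<in>X. (p a - q a)^2) \<le> 4 * kl_on X p q"
    and "(tv_on X p q)^2 \<le> kl_on X p q"
proof -
  have le1: "p a \<le> 1" "q a \<le> 1" if "a \<in> X" for a
    using that assms member_le_sum[of a X p] member_le_sum[of a X q] by auto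
  have fact1: "p a - q a = (sqrt (p a) - sqrt (q a)) * (sqrt (p a) + sqrt (q a))" if "a \<in> X" for a
  proof -
    have "(sqrt (p a) - sqrt (q a)) * (sqrt (p a) + sqrt (q a)) = (sqrt (p a))^2 - (sqrt (q a))^2"
      by (simp add: power2_eq_square algebra_simps)
    then show ?thesis using assms(2,3)[OF that] by simp
  qed
  have fac: "(p a - q a)^2 = (sqrt (p a) - sqrt (q a))^2 * (sqrt (p a) + sqrt (q a))^2" if "a \<in> X" for a
    unfolding fact1[OF that] by (rule power_mult_distrib)
  have sq2: "(sqrt (p a) + sqrt (q a))^2 \<le> 2 * (p a + q a)" if "a \<in> X" for a
  proof -
    have e0: "(sqrt (p a) + sqrt (q a))^2 + (sqrt (p a) - sqrt (q a))^2 = 2 * ((sqrt (p a))^2 + (sqrt (q a))^2)"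
      by (simp add: power2_eq_square algebra_simps)
    have e: "(sqrt (p a) + sqrt (q a))^2 + (sqrt (p a) - sqrt (q a))^2 = 2 * (p a + q a)"
      using e0 assms(2,3)[OF that] by (simp only: real_sqrt_pow2)
    show ?thesis by (rule aux_le[OF e]) simp
  qed
  have sq4: "(sqrt (p a) + sqrt (q a))^2 \<le> 4" if "a \<in> X" for a
    by (rule order_trans[OF sq2[OF that] aux_le2[OF le1[OF that]]])
  have "(\<Sum>a\<in>X. (p a - q a)^2) \<le> (\<Sum>a\<in>X. (sqrt (p a) - sqrt (q a))^2 * 4)"
    using fac sq4 by (intro sum_mono) (simp add: mult_left_mono)
  also have "\<dots> = (\<Sum>a\<in>X. (sqrt (p a) - sqrt (q a))^2) * 4" by (rule sum_distrib_right[symmetric])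
  also have "\<dots> \<le> kl_on X p q * 4" using kl_hell[OF assms] by (rule mult_right_mono) simp_all
  finally show "(\<Sum>a\<in>X. (p a - q a)^2) \<le> 4 * kl_on X p q" by (simp only: mult.commute)
  have abs_eq: "\<bar>p a - q a\<bar> = \<bar>sqrt (p a) - sqrt (q a)\<bar> * (sqrt (p a) + sqrt (q a))" if "a \<in> X" for a
    unfolding fact1[OF that] abs_mult using assms(2,3)[OF that] by simp
  have "(\<Sum>a\<in>X. \<bar>p a - q a\<bar>)^2 = (\<Sum>a\<in>X. \<bar>sqrt (p a) - sqrt (q a)\<bar> * (sqrt (p a) + sqrt (q a)))^2"
    by (simp only: sum.cong[OF refl abs_eq])
  also have "\<dots> \<le> (\<Sum>a\<in>X. \<bar>sqrt (p a) - sqrt (q a)\<bar>^2) * (\<Sum>a\<in>X. (sqrt (p a) + sqrt (q a))^2)"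
    by (rule Cauchy_Schwarz_ineq_sum)
  also have "\<dots> = (\<Sum>a\<in>X. (sqrt (p a) - sqrt (q a))^2) * (\<Sum>a\<in>X. (sqrt (p a) + sqrt (q a))^2)"
    by (simp only: power2_abs)
  also have "\<dots> \<le> (\<Sum>a\<in>X. (sqrt (p a) - sqrt (q a))^2) * 4"
  proof (rule mult_left_mono)
    have "(\<Sum>a\<in>X. (sqrt (p a) + sqrt (q a))^2) \<le> (\<Sum>a\<in>X. 2 * (p a + q a))"
      using sq2 by (rule sum_mono)
    also have "\<dots> = 2 * (sum p X + sum q X)" by (simp add: sum_distrib_left sum.distrib)
    also have "\<dots> = 4" using assms(4,5) by simp
    finally show "(\<Sum>a\<in>X. (sqrt (p a) + sqrt (q a))^2) \<le> 4" .
  qed (simp add: sum_nonneg)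
  also have "\<dots> \<le> kl_on X p q * 4" using kl_hell[OF assms] by (rule mult_right_mono) simp_all
  finally have fin: "(\<Sum>a\<in>X. \<bar>p a - q a\<bar>)^2 \<le> kl_on X p q * 4" .
  have "(tv_on X p q)^2 = (\<Sum>a\<in>X. \<bar>p a - q a\<bar>)^2 / 4" unfolding tv_on_def power_mult_distrib
    by (simp add: power2_eq_square)
  then show "(tv_on X p q)^2 \<le> kl_on X p q" using fin by simp
qed

lemma term_ineq:
  fixes f zA z a c ay y zy :: real
  assumes "f > 0" "zA > 0" "z > 0" "a > 0" "c > 0" "ay > 0" "y > 0" "zy > 0"
  shows "(f/c) * ln ((zA/z)/(a/c)) \<le> (f/c) * ln ((ay/c)/((a/c) * (y/c))) + (f/c) * ln ((f/y)/((ay/y) * (zy/y))) + (zy * zA/z - f)/c"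
proof -
  define t where "t = (zy * zA)/(z * f)"
  have tpos: "t > 0" unfolding t_def using assms by simp
  have prod: "(zA/z)/(a/c) = ((ay/c)/((a/c) * (y/c))) * ((f/y)/((ay/y) * (zy/y))) * t"
    unfolding t_def using assms by (simp add: field_simps)
  define X where "X = (ay/c)/((a/c) * (y/c))"
  define Y where "Y = (f/y)/((ay/y) * (zy/y))"
  have Xp: "X > 0" unfolding X_def using assms by simp
  have Yp: "Y > 0" unfolding Y_def using assms by simp
  have "ln (X * Y * t) = ln X + ln Y + ln t"
    using Xp Yp tpos by (simp add: ln_mult)
  then have "ln ((zA/z)/(a/c)) = ln ((ay/c)/((a/c) * (y/c))) + ln ((f/y)/((ay/y) * (zy/y))) + ln t"
    unfolding prod X_def Y_def .
  then have e: "(f/c) * ln ((zA/z)/(a/c)) = (f/c) * ln ((ay/c)/((a/c) * (y/c))) + (f/c) * ln ((f/y)/((ay/y) * (zy/y))) + (f/c) * ln t"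
    by (simp add: distrib_left)
  have "ln t \<le> t - 1" using tpos by (rule ln_le_minus_one)
  then have "(f/c) * ln t \<le> (f/c) * (t - 1)" using assms by (intro mult_left_mono) simp_all
  also have "(f/c) * (t - 1) = (zy * zA/z - f)/c" unfolding t_def using assms by (simp add: field_simps)
  finally show ?thesis unfolding e by simp
qed

lemma sum_zero_nonneg:
  fixes g :: "'a \<Rightarrow> real"
  assumes "finite I" "\<And>i. i \<in> I \<Longrightarrow> g i \<ge> 0" "sum g I = 0" "i \<in> I"
  shows "g i = 0"
  using assms sum_nonneg_eq_0_iff by blast

lemma core:
  fixes f :: "nat \<Rightarrow> nat \<Rightarrow> nat \<Rightarrow> real"
  assumes fin: "finite Zs" "finite As" "finite Ys"
  and nn: "\<And>z a y. f z a y \<ge> 0"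
  defines "fZ \<equiv> \<lambda>z. \<Sum>a\<in>As. \<Sum>y\<in>Ys. f z a y"
    and "fA \<equiv> \<lambda>a. \<Sum>z\<in>Zs. \<Sum>y\<in>Ys. f z a y"
    and "fY \<equiv> \<lambda>y. \<Sum>z\<in>Zs. \<Sum>a\<in>As. f z a y"
    and "fZA \<equiv> \<lambda>z a. \<Sum>y\<in>Ys. f z a y"
    and "fAY \<equiv> \<lambda>a y. \<Sum>z\<in>Zs. f z a y"
    and "fZY \<equiv> \<lambda>z y. \<Sum>a\<in>As. f z a y"
    and "c \<equiv> \<Sum>z\<in>Zs. \<Sum>a\<in>As. \<Sum>y\<in>Ys. f z a y"
  assumes cpos: "c > 0"
  and cond: "\<And>y. y \<in> Ys \<Longrightarrow> fY y > 0 \<Longrightarrow>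
     (\<Sum>a\<in>As. \<Sum>z\<in>Zs. (f z a y / fY y) * ln ((f z a y / fY y) / ((fAY a y / fY y) * (fZY z y / fY y)))) = 0"
  shows "(\<Sum>z\<in>Zs. (fZ z / c) * (\<Sum>a\<in>As. (fZA z a / fZ z) * ln ((fZA z a / fZ z) / (fA a / c))))
     \<le> (\<Sum>a\<in>As. \<Sum>y\<in>Ys. (fAY a y / c) * ln ((fAY a y / c) / ((fA a / c) * (fY y / c))))"
proof -
  define L where "L = (\<lambda>z a y. (f z a y / c) * ln ((fZA z a / fZ z) / (fA a / c)))"
  define R1 where "R1 = (\<lambda>z a y. (f z a y / c) * ln ((fAY a y / c) / ((fA a / c) * (fY y / c))))"
  define R2 where "R2 = (\<lambda>z a y. (f z a y / c) * ln ((f z a y / fY y) / ((fAY a y / fY y) * (fZY z y / fY y))))"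
  define T where "T = (\<lambda>z a y. (fZY z y * fZA z a / fZ z - f z a y) / c)"
  have nnZA: "fZA z a \<ge> 0" for z a unfolding fZA_def by (intro sum_nonneg nn)
  have nnZY: "fZY z y \<ge> 0" for z y unfolding fZY_def by (intro sum_nonneg nn)
  have nnAY: "fAY a y \<ge> 0" for a y unfolding fAY_def by (intro sum_nonneg nn)
  have nnZ: "fZ z \<ge> 0" for z unfolding fZ_def by (intro sum_nonneg nn)
  have nnA: "fA a \<ge> 0" for a unfolding fA_def by (intro sum_nonneg nn)
  have nnY: "fY y \<ge> 0" for y unfolding fY_def by (intro sum_nonneg nn)
  have fZ_eq: "fZ z = (\<Sum>a\<in>As. fZA z a)" for z unfolding fZ_def fZA_def ..
  have fZ_eq2: "fZ z = (\<Sum>y\<in>Ys. fZY z y)" for z unfolding fZ_def fZY_def by (rule sum.swap)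
  have fA_eq: "fA a = (\<Sum>y\<in>Ys. fAY a y)" for a unfolding fA_def fAY_def by (rule sum.swap)
  have fY_eq: "fY y = (\<Sum>a\<in>As. fAY a y)" for y unfolding fY_def fAY_def by (rule sum.swap)
  have le_ZA: "f z a y \<le> fZA z a" if "y \<in> Ys" for z a y
    unfolding fZA_def using that fin by (intro member_le_sum nn) auto
  have le_ZY: "f z a y \<le> fZY z y" if "a \<in> As" for z a y
    unfolding fZY_def using that fin by (intro member_le_sum nn) auto
  have le_AY: "f z a y \<le> fAY a y" if "z \<in> Zs" for z a y
    unfolding fAY_def using that fin by (intro member_le_sum nn) auto
  have le_Z: "fZA z a \<le> fZ z" if "a \<in> As" for z a
    unfolding fZ_eq using that fin by (intro member_le_sum nnZA) auto
  have le_A: "fAY a y \<le> fA a" if "y \<in> Ys" for a y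
    unfolding fA_eq using that fin by (intro member_le_sum nnAY) auto
  have le_Y: "fAY a y \<le> fY y" if "a \<in> As" for a y
    unfolding fY_eq using that fin by (intro member_le_sum nnAY) auto

  have tw: "L z a y \<le> R1 z a y + R2 z a y + T z a y" if "z \<in> Zs" "a \<in> As" "y \<in> Ys" for z a y
  proof (cases "f z a y = 0")
    case True
    have "T z a y \<ge> 0" unfolding T_def True using cpos nnZY nnZA nnZ by simp
    then show ?thesis unfolding L_def R1_def R2_def True by simp
  next
    case False
    then have fp: "f z a y > 0" using nn[of z a y] by simp
    have p1: "fZA z a > 0" using fp le_ZA[OF that(3), of z a] by linarith
    have p2: "fZ z > 0" using p1 le_Z[OF that(2), of z] by linarith
    have p3: "fAY a y > 0" using fp le_AY[OF that(1), of a y] by linarith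
    have p4: "fA a > 0" using p3 le_A[OF that(3), of a] by linarith
    have p5: "fY y > 0" using p3 le_Y[OF that(2), of y] by linarith
    have p6: "fZY z y > 0" using fp le_ZY[OF that(2), of z y] by linarith
    show ?thesis unfolding L_def R1_def R2_def T_def
      by (rule term_ineq[OF fp p1 p2 p4 cpos p3 p5 p6])
  qed
  have S: "(\<Sum>z\<in>Zs. \<Sum>a\<in>As. \<Sum>y\<in>Ys. L z a y) \<le> (\<Sum>z\<in>Zs. \<Sum>a\<in>As. \<Sum>y\<in>Ys. R1 z a y + R2 z a y + T z a y)"
    using tw by (intro sum_mono) auto
  also have "\<dots> = (\<Sum>z\<in>Zs. \<Sum>a\<in>As. \<Sum>y\<in>Ys. R1 z a y) + (\<Sum>z\<in>Zs. \<Sum>a\<in>As. \<Sum>y\<in>Ys. R2 z a y) + (\<Sum>z\<in>Zs. \<Sum>a\<in>As. \<Sum>y\<in>Ys. T z a y)"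
    by (simp add: sum.distrib)
  finally have S: "(\<Sum>z\<in>Zs. \<Sum>a\<in>As. \<Sum>y\<in>Ys. L z a y) \<le> (\<Sum>z\<in>Zs. \<Sum>a\<in>As. \<Sum>y\<in>Ys. R1 z a y) + (\<Sum>z\<in>Zs. \<Sum>a\<in>As. \<Sum>y\<in>Ys. R2 z a y) + (\<Sum>z\<in>Zs. \<Sum>a\<in>As. \<Sum>y\<in>Ys. T z a y)" .

  have eqL: "(\<Sum>z\<in>Zs. (fZ z / c) * (\<Sum>a\<in>As. (fZA z a / fZ z) * ln ((fZA z a / fZ z) / (fA a / c))))
      = (\<Sum>z\<in>Zs. \<Sum>a\<in>As. \<Sum>y\<in>Ys. L z a y)"
  proof (rule sum.cong[OF refl])
    fix z assume z: "z \<in> Zs"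
    have inner: "(\<Sum>y\<in>Ys. L z a y) = (fZA z a / c) * ln ((fZA z a / fZ z) / (fA a / c))" for a
      unfolding L_def fZA_def by (simp add: sum_distrib_right sum_divide_distrib)
    show "(fZ z / c) * (\<Sum>a\<in>As. (fZA z a / fZ z) * ln ((fZA z a / fZ z) / (fA a / c)))
      = (\<Sum>a\<in>As. \<Sum>y\<in>Ys. L z a y)"
    proof (cases "fZ z = 0")
      case True
      then have "fZA z a = 0" if "a \<in> As" for a using le_Z[OF that, of z] nnZA[of z a] by linarith
      then show ?thesis unfolding inner using True by simp
    next
      case False
      then show ?thesis unfolding inner by (simp add: sum_distrib_left)
    qed
  qed
  have eqR1: "(\<Sum>z\<in>Zs. \<Sum>a\<in>As. \<Sum>y\<in>Ys. R1 z a y) = (\<Sum>a\<in>As. \<Sum>y\<in>Ys. (fAY a y / c) * ln ((fAY a y / c) / ((fA a / c) * (fY y / c))))"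
  proof -
    have "(\<Sum>z\<in>Zs. \<Sum>a\<in>As. \<Sum>y\<in>Ys. R1 z a y) = (\<Sum>a\<in>As. \<Sum>z\<in>Zs. \<Sum>y\<in>Ys. R1 z a y)" by (rule sum.swap)
    also have "\<dots> = (\<Sum>a\<in>As. \<Sum>y\<in>Ys. \<Sum>z\<in>Zs. R1 z a y)" by (intro sum.cong[OF refl] sum.swap)
    also have "\<dots> = (\<Sum>a\<in>As. \<Sum>y\<in>Ys. (fAY a y / c) * ln ((fAY a y / c) / ((fA a / c) * (fY y / c))))"
      unfolding R1_def fAY_def by (simp add: sum_distrib_right sum_divide_distrib)
    finally show ?thesis .
  qed
  have eqR2: "(\<Sum>z\<in>Zs. \<Sum>a\<in>As. \<Sum>y\<in>Ys. R2 z a y) = 0"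
  proof -
    have "(\<Sum>z\<in>Zs. \<Sum>a\<in>As. \<Sum>y\<in>Ys. R2 z a y) = (\<Sum>z\<in>Zs. \<Sum>y\<in>Ys. \<Sum>a\<in>As. R2 z a y)" by (intro sum.cong[OF refl] sum.swap)
    also have "\<dots> = (\<Sum>y\<in>Ys. \<Sum>z\<in>Zs. \<Sum>a\<in>As. R2 z a y)" by (rule sum.swap)
    also have "\<dots> = (\<Sum>y\<in>Ys. \<Sum>a\<in>As. \<Sum>z\<in>Zs. R2 z a y)" by (intro sum.cong[OF refl] sum.swap)
    also have "\<dots> = (\<Sum>y\<in>Ys. 0)"
    proof (rule sum.cong[OF refl])
      fix y assume y: "y \<in> Ys"
      show "(\<Sum>a\<in>As. \<Sum>z\<in>Zs. R2 z a y) = 0"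
      proof (cases "fY y = 0")
        case True
        have "f z a y = 0" if "z \<in> Zs" "a \<in> As" for z a
          using le_AY[OF that(1), of a y] le_Y[OF that(2), of y] True nn[of z a y] by linarith
        then show ?thesis unfolding R2_def by simp
      next
        case False
        then have pos: "fY y > 0" using nnY[of y] by linarith
        have "(\<Sum>a\<in>As. \<Sum>z\<in>Zs. R2 z a y) = (fY y / c) * (\<Sum>a\<in>As. \<Sum>z\<in>Zs. (f z a y / fY y) * ln ((f z a y / fY y) / ((fAY a y / fY y) * (fZY z y / fY y))))"
          unfolding R2_def using pos by (simp add: sum_distrib_left)
        also have "\<dots> = 0" using cond[OF y pos] by simp
        finally show ?thesis .
      qed
    qed
    finally show ?thesis by simp
  qed
  have eqT: "(\<Sum>z\<in>Zs. \<Sum>a\<in>As. \<Sum>y\<in>Ys. T z a y) = 0"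
  proof -
    have A1: "(\<Sum>z\<in>Zs. \<Sum>a\<in>As. \<Sum>y\<in>Ys. fZY z y * fZA z a / fZ z) = c"
    proof -
      have "(\<Sum>a\<in>As. \<Sum>y\<in>Ys. fZY z y * fZA z a / fZ z) = fZ z" for z
      proof -
        have "(\<Sum>a\<in>As. \<Sum>y\<in>Ys. fZY z y * fZA z a / fZ z) = (\<Sum>a\<in>As. \<Sum>y\<in>Ys. (fZA z a / fZ z) * fZY z y)"
          by (intro sum.cong refl) simp
        also have "\<dots> = (\<Sum>a\<in>As. fZA z a / fZ z) * (\<Sum>y\<in>Ys. fZY z y)"
          by (rule sum_product[symmetric])
        also have "\<dots> = (\<Sum>a\<in>As. fZA z a) / fZ z * (\<Sum>y\<in>Ys. fZY z y)"
          by (simp add: sum_divide_distrib)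
        also have "\<dots> = fZ z * fZ z / fZ z" using fZ_eq[of z] fZ_eq2[of z] by simp
        also have "\<dots> = fZ z" by simp
        finally show ?thesis .
      qed
      then show ?thesis unfolding c_def fZ_def by simp
    qed
    have d1: "(\<Sum>z\<in>Zs. \<Sum>a\<in>As. \<Sum>y\<in>Ys. fZY z y * fZA z a / fZ z - f z a y) = (\<Sum>z\<in>Zs. \<Sum>a\<in>As. \<Sum>y\<in>Ys. fZY z y * fZA z a / fZ z) - c"
      unfolding c_def by (simp add: sum_subtractf)
    have "(\<Sum>z\<in>Zs. \<Sum>a\<in>As. \<Sum>y\<in>Ys. T z a y) = (\<Sum>z\<in>Zs. \<Sum>a\<in>As. \<Sum>y\<in>Ys. fZY z y * fZA z a / fZ z - f z a y) / c"
      unfolding T_def by (simp only: sum_divide_distrib)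
    also have "\<dots> = ((\<Sum>z\<in>Zs. \<Sum>a\<in>As. \<Sum>y\<in>Ys. fZY z y * fZA z a / fZ z) - c) / c" unfolding d1 ..
    finally have "(\<Sum>z\<in>Zs. \<Sum>a\<in>As. \<Sum>y\<in>Ys. T z a y) = ((\<Sum>z\<in>Zs. \<Sum>a\<in>As. \<Sum>y\<in>Ys. fZY z y * fZA z a / fZ z) - c) / c" .
    then show ?thesis using A1 by simp
  qed
  show ?thesis using S eqL eqR1 eqR2 eqT by simp
qed

lemma pmf_le_fst: "pmf Q (u, v) \<le> pmf (map_pmf fst Q) u"
proof -
  have "pmf Q (u, v) = measure Q {(u, v)}" by (simp add: measure_pmf_single)
  also have "\<dots> \<le> measure Q (fst -` {u})" by (intro measure_pmf.finite_measure_mono) auto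
  finally show ?thesis by (simp add: pmf_map)
qed

lemma pmf_le_snd: "pmf Q (u, v) \<le> pmf (map_pmf snd Q) v"
proof -
  have "pmf Q (u, v) = measure Q {(u, v)}" by (simp add: measure_pmf_single)
  also have "\<dots> \<le> measure Q (snd -` {v})" by (intro measure_pmf.finite_measure_mono) auto
  finally show ?thesis by (simp add: pmf_map)
qed

lemma mi_superset:
  assumes "finite F" "set_pmf Q \<subseteq> F"
  shows "mutual_info Q = (\<Sum>(u, v)\<in>F. pmf Q (u, v) * ln (pmf Q (u, v) / (pmf (map_pmf fst Q) u * pmf (map_pmf snd Q) v)))"
  unfolding mutual_info_def
  by (rule sum.mono_neutral_left) (use assms in \<open>auto simp: set_pmf_eq\<close>)

lemma kl_term_lb:
  fixes p q :: real assumes "p > 0" "q > 0"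
  shows "p - q \<le> p * ln (p / q)"
proof -
  have "ln (q/p) \<le> q/p - 1" using assms by (intro ln_le_minus_one) simp
  moreover have "ln (p/q) = - ln (q/p)" using assms by (simp add: ln_div)
  ultimately have "p * (1 - q/p) \<le> p * ln (p/q)" using assms by (intro mult_left_mono) simp_all
  moreover have "p * (1 - q/p) = p - q" using assms by (simp add: field_simps)
  ultimately show ?thesis by simp
qed

lemma kl_term_ub:
  fixes p q :: real assumes "p > 0" "q > 0"
  shows "p * ln (p / q) \<le> p * (p / q)"
proof -
  have "ln (p/q) \<le> p/q - 1" using assms by (intro ln_le_minus_one) simp
  then have "ln (p/q) \<le> p/q" by simp
  then show ?thesis using assms by (intro mult_left_mono) simp_all
qed

lemma mi_nonneg:
  assumes fin: "finite (set_pmf Q)"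
  shows "0 \<le> mutual_info Q"
proof -
  let ?pu = "pmf (map_pmf fst Q)" and ?pv = "pmf (map_pmf snd Q)"
  let ?U = "fst ` set_pmf Q" and ?V = "snd ` set_pmf Q"
  have tw: "pmf Q (u, v) - ?pu u * ?pv v \<le> pmf Q (u, v) * ln (pmf Q (u, v) / (?pu u * ?pv v))"
    if "(u, v) \<in> set_pmf Q" for u v
  proof -
    have p: "pmf Q (u, v) > 0" using that by (simp add: pmf_positive)
    have "?pu u > 0" "?pv v > 0" using p pmf_le_fst[of Q u v] pmf_le_snd[of Q u v] by linarith+
    then show ?thesis using kl_term_lb[OF p] by simp
  qed
  have "(\<Sum>x\<in>set_pmf Q. pmf Q x - ?pu (fst x) * ?pv (snd x)) \<le> mutual_info Q"
    unfolding mutual_info_def using tw by (intro sum_mono) auto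
  moreover have "(\<Sum>x\<in>set_pmf Q. pmf Q x - ?pu (fst x) * ?pv (snd x)) = 1 - (\<Sum>x\<in>set_pmf Q. ?pu (fst x) * ?pv (snd x))"
    using sum_pmf_eq_1[OF fin order.refl] by (simp add: sum_subtractf)
  moreover have "(\<Sum>x\<in>set_pmf Q. ?pu (fst x) * ?pv (snd x)) \<le> (\<Sum>x\<in>?U \<times> ?V. ?pu (fst x) * ?pv (snd x))"
    using fin by (intro sum_mono2) force+
  moreover have "(\<Sum>x\<in>?U \<times> ?V. ?pu (fst x) * ?pv (snd x)) = 1"
  proof -
    have "(\<Sum>x\<in>?U \<times> ?V. ?pu (fst x) * ?pv (snd x)) = (\<Sum>u\<in>?U. ?pu u) * (\<Sum>v\<in>?V. ?pv v)"
      by (simp add: sum_product sum.cartesian_product case_prod_beta)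
    moreover have "(\<Sum>u\<in>?U. ?pu u) = 1" using fin by (intro sum_pmf_eq_1) auto
    moreover have "(\<Sum>v\<in>?V. ?pv v) = 1" using fin by (intro sum_pmf_eq_1) auto
    ultimately show ?thesis by simp
  qed
  ultimately show ?thesis by linarith
qed

lemma mi_ub:
  assumes fin: "finite (set_pmf Q)"
  shows "mutual_info Q \<le> real (card (set_pmf Q))"
proof -
  let ?pu = "pmf (map_pmf fst Q)" and ?pv = "pmf (map_pmf snd Q)"
  have tw: "pmf Q (u, v) * ln (pmf Q (u, v) / (?pu u * ?pv v)) \<le> 1"
    if "(u, v) \<in> set_pmf Q" for u v
  proof -
    have p: "pmf Q (u, v) > 0" using that by (simp add: pmf_positive)
    have a: "pmf Q (u, v) \<le> ?pu u" "pmf Q (u, v) \<le> ?pv v" using pmf_le_fst[of Q u v] pmf_le_snd[of Q u v] by auto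
    have q: "?pu u * ?pv v > 0" using p a by simp
    have "pmf Q (u, v) * pmf Q (u, v) \<le> ?pu u * ?pv v" using a p by (intro mult_mono) auto
    then have "pmf Q (u, v) * (pmf Q (u, v) / (?pu u * ?pv v)) \<le> 1" using q by (simp add: field_simps)
    then show ?thesis using kl_term_ub[OF p q] by linarith
  qed
  have "mutual_info Q \<le> real (card (set_pmf Q)) * 1"
    unfolding mutual_info_def using tw by (intro sum_bounded_above) auto
  then show ?thesis by simp
qed

lemma sample_eta: "x = (sS x, zZ x, aA x, yY x)"
  by (simp add: sS_def zZ_def aA_def yY_def)

lemma sel_simps[simp]: "sS (s, z, a, y) = s" "zZ (s, z, a, y) = z" "aA (s, z, a, y) = a" "yY (s, z, a, y) = y"
  by (simp_all add: sS_def zZ_def aA_def yY_def)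

lemma meas_fin:
  assumes "finite I" "inj_on g I" "g ` I \<subseteq> A" "A \<inter> set_pmf P \<subseteq> g ` I"
  shows "measure P A = (\<Sum>i\<in>I. pmf P (g i))"
proof -
  have "measure P A = measure P (g ` I)"
    by (rule measure_prob_cong_0) (use assms in \<open>auto simp: set_pmf_eq\<close>)
  also have "\<dots> = sum (pmf P) (g ` I)" using assms by (simp add: measure_measure_pmf_finite)
  also have "\<dots> = (\<Sum>i\<in>I. pmf P (g i))" using assms by (simp add: sum.reindex)
  finally show ?thesis .
qed

lemma meas_cond:
  assumes ne: "set_pmf P \<inter> E \<noteq> {}" and "finite I" "inj_on g I" "g ` I \<subseteq> A \<inter> E" "A \<inter> E \<inter> set_pmf P \<subseteq> g ` I"
  shows "measure (cond_pmf P E) A = (\<Sum>i\<in>I. pmf P (g i)) / measure P E"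
proof -
  have "measure (cond_pmf P E) A = measure (cond_pmf P E) (g ` I)"
  proof (rule measure_prob_cong_0)
    fix x assume x: "x \<in> A - g ` I"
    show "pmf (cond_pmf P E) x = 0"
    proof (cases "x \<in> E")
      case True
      then have "x \<notin> set_pmf P" using x assms by auto
      then show ?thesis using True by (simp add: pmf_cond[OF ne] set_pmf_eq)
    next
      case False then show ?thesis by (simp add: pmf_cond[OF ne])
    qed
  next
    fix x assume "x \<in> g ` I - A" then show "pmf (cond_pmf P E) x = 0" using assms by auto
  qed
  also have "\<dots> = sum (pmf (cond_pmf P E)) (g ` I)" using assms by (simp add: measure_measure_pmf_finite)
  also have "\<dots> = (\<Sum>i\<in>I. pmf (cond_pmf P E) (g i))" using assms by (simp add: sum.reindex)
  also have "\<dots> = (\<Sum>i\<in>I. pmf P (g i) / measure P E)"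
    using assms by (intro sum.cong refl) (auto simp: pmf_cond[OF ne])
  finally show ?thesis by (simp add: sum_divide_distrib)
qed

lemma sum3: "(\<Sum>i\<in>A \<times> B \<times> C. h i) = (\<Sum>z\<in>A. \<Sum>a\<in>B. \<Sum>y\<in>C. h (z, a, y))"
  by (simp add: sum.cartesian_product)

lemma sum2: "(\<Sum>i\<in>A \<times> B. h i) = (\<Sum>z\<in>A. \<Sum>a\<in>B. h (z, a))"
  by (simp add: sum.cartesian_product)

definition supp_ok :: "sample pmf \<Rightarrow> nat \<Rightarrow> nat \<Rightarrow> nat set \<Rightarrow> bool" where
  "supp_ok P N B X \<longleftrightarrow> finite X \<and> (\<forall>x\<in>set_pmf P. zZ x \<in> {1..N} \<and> aA x \<in> X \<and> yY x \<in> {1..B})"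

lemma B1:
  assumes "supp_ok P N B X"
  shows "measure P {x. sS x = s} = (\<Sum>z\<in>{1..N}. \<Sum>a\<in>X. \<Sum>y\<in>{1..B}. pmf P (s, z, a, y))"
proof -
  have "measure P {x. sS x = s} = (\<Sum>i\<in>{1..N} \<times> X \<times> {1..B}. pmf P ((\<lambda>(z, a, y). (s, z, a, y)) i))"
  proof (rule meas_fin)
    show "{x. sS x = s} \<inter> set_pmf P \<subseteq> (\<lambda>(z, a, y). (s, z, a, y)) ` ({1..N} \<times> X \<times> {1..B})"
    proof
      fix x assume x: "x \<in> {x. sS x = s} \<inter> set_pmf P"
      then have "x = (\<lambda>(z, a, y). (s, z, a, y)) (zZ x, aA x, yY x)" using sample_eta[of x] by auto
      moreover have "(zZ x, aA x, yY x) \<in> {1..N} \<times> X \<times> {1..B}" using x assms unfolding supp_ok_def by auto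
      ultimately show "x \<in> (\<lambda>(z, a, y). (s, z, a, y)) ` ({1..N} \<times> X \<times> {1..B})" by blast
    qed
  qed (use assms in \<open>auto simp: supp_ok_def inj_on_def\<close>)
  then show ?thesis by (simp add: sum3)
qed

lemma B3:
  assumes "supp_ok P N B X"
  shows "measure P {x. sS x = s \<and> zZ x = i} = (\<Sum>a\<in>X. \<Sum>y\<in>{1..B}. pmf P (s, i, a, y))"
proof -
  have "measure P {x. sS x = s \<and> zZ x = i} = (\<Sum>j\<in>X \<times> {1..B}. pmf P ((\<lambda>(a, y). (s, i, a, y)) j))"
  proof (rule meas_fin)
    show "{x. sS x = s \<and> zZ x = i} \<inter> set_pmf P \<subseteq> (\<lambda>(a, y). (s, i, a, y)) ` (X \<times> {1..B})"
    proof
      fix x assume x: "x \<in> {x. sS x = s \<and> zZ x = i} \<inter> set_pmf P"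
      then have "x = (\<lambda>(a, y). (s, i, a, y)) (aA x, yY x)" using sample_eta[of x] by auto
      moreover have "(aA x, yY x) \<in> X \<times> {1..B}" using x assms unfolding supp_ok_def by auto
      ultimately show "x \<in> (\<lambda>(a, y). (s, i, a, y)) ` (X \<times> {1..B})" by blast
    qed
  qed (use assms in \<open>auto simp: supp_ok_def inj_on_def\<close>)
  then show ?thesis by (simp add: sum2)
qed

lemma B3y:
  assumes "supp_ok P N B X"
  shows "measure P {x. sS x = s \<and> yY x = y} = (\<Sum>z\<in>{1..N}. \<Sum>a\<in>X. pmf P (s, z, a, y))"
proof -
  have "measure P {x. sS x = s \<and> yY x = y} = (\<Sum>j\<in>{1..N} \<times> X. pmf P ((\<lambda>(z, a). (s, z, a, y)) j))"
  proof (rule meas_fin)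
    show "{x. sS x = s \<and> yY x = y} \<inter> set_pmf P \<subseteq> (\<lambda>(z, a). (s, z, a, y)) ` ({1..N} \<times> X)"
    proof
      fix x assume x: "x \<in> {x. sS x = s \<and> yY x = y} \<inter> set_pmf P"
      then have "x = (\<lambda>(z, a). (s, z, a, y)) (zZ x, aA x)" using sample_eta[of x] by auto
      moreover have "(zZ x, aA x) \<in> {1..N} \<times> X" using x assms unfolding supp_ok_def by auto
      ultimately show "x \<in> (\<lambda>(z, a). (s, z, a, y)) ` ({1..N} \<times> X)" by blast
    qed
  qed (use assms in \<open>auto simp: supp_ok_def inj_on_def\<close>)
  then show ?thesis by (simp add: sum2)
qed

lemma B2:
  assumes "supp_ok P N B X" "set_pmf P \<inter> {x. sS x = s} \<noteq> {}"
  shows "wt P s i = (\<Sum>a\<in>X. \<Sum>y\<in>{1..B}. pmf P (s, i, a, y)) / measure P {x. sS x = s}"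
proof -
  have "wt P s i = measure (cond_pmf P {x. sS x = s}) (zZ -` {i})" unfolding wt_def pmf_map ..
  also have "\<dots> = (\<Sum>j\<in>X \<times> {1..B}. pmf P ((\<lambda>(a, y). (s, i, a, y)) j)) / measure P {x. sS x = s}"
  proof (rule meas_cond[OF assms(2)])
    show "zZ -` {i} \<inter> {x. sS x = s} \<inter> set_pmf P \<subseteq> (\<lambda>(a, y). (s, i, a, y)) ` (X \<times> {1..B})"
    proof
      fix x assume x: "x \<in> zZ -` {i} \<inter> {x. sS x = s} \<inter> set_pmf P"
      then have "x = (\<lambda>(a, y). (s, i, a, y)) (aA x, yY x)" using sample_eta[of x] by auto
      moreover have "(aA x, yY x) \<in> X \<times> {1..B}" using x assms unfolding supp_ok_def by auto
      ultimately show "x \<in> (\<lambda>(a, y). (s, i, a, y)) ` (X \<times> {1..B})" by blast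
    qed
  qed (use assms in \<open>auto simp: supp_ok_def inj_on_def\<close>)
  finally show ?thesis by (simp add: sum2)
qed

lemma B4:
  assumes "supp_ok P N B X" "set_pmf P \<inter> {x. sS x = s \<and> zZ x = i} \<noteq> {}"
  shows "pol P s i a = (\<Sum>y\<in>{1..B}. pmf P (s, i, a, y)) / measure P {x. sS x = s \<and> zZ x = i}"
proof -
  have "pol P s i a = measure (cond_pmf P {x. sS x = s \<and> zZ x = i}) (aA -` {a})" unfolding pol_def pmf_map ..
  also have "\<dots> = (\<Sum>y\<in>{1..B}. pmf P ((\<lambda>y. (s, i, a, y)) y)) / measure P {x. sS x = s \<and> zZ x = i}"
  proof (rule meas_cond[OF assms(2)])
    show "aA -` {a} \<inter> {x. sS x = s \<and> zZ x = i} \<inter> set_pmf P \<subseteq> (\<lambda>y. (s, i, a, y)) ` {1..B}"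
    proof
      fix x assume x: "x \<in> aA -` {a} \<inter> {x. sS x = s \<and> zZ x = i} \<inter> set_pmf P"
      then have "x = (\<lambda>y. (s, i, a, y)) (yY x)" using sample_eta[of x] by auto
      moreover have "yY x \<in> {1..B}" using x assms unfolding supp_ok_def by auto
      ultimately show "x \<in> (\<lambda>y. (s, i, a, y)) ` {1..B}" by blast
    qed
  qed (use assms in \<open>auto simp: supp_ok_def inj_on_def\<close>)
  finally show ?thesis by simp
qed

lemma B6a:
  assumes "supp_ok P N B X" "set_pmf P \<inter> {x. sS x = s} \<noteq> {}"
  shows "pmf (map_pmf (\<lambda>x. (aA x, yY x)) (cond_pmf P {x. sS x = s})) (a, y)
     = (\<Sum>z\<in>{1..N}. pmf P (s, z, a, y)) / measure P {x. sS x = s}"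
proof -
  have "pmf (map_pmf (\<lambda>x. (aA x, yY x)) (cond_pmf P {x. sS x = s})) (a, y) = measure (cond_pmf P {x. sS x = s}) ((\<lambda>x. (aA x, yY x)) -` {(a, y)})" unfolding pmf_map ..
  also have "\<dots> = (\<Sum>z\<in>{1..N}. pmf P ((\<lambda>z. (s, z, a, y)) z)) / measure P {x. sS x = s}"
  proof (rule meas_cond[OF assms(2)])
    show "(\<lambda>x. (aA x, yY x)) -` {(a, y)} \<inter> {x. sS x = s} \<inter> set_pmf P \<subseteq> (\<lambda>z. (s, z, a, y)) ` {1..N}"
    proof
      fix x assume x: "x \<in> (\<lambda>x. (aA x, yY x)) -` {(a, y)} \<inter> {x. sS x = s} \<inter> set_pmf P"
      then have "x = (\<lambda>z. (s, z, a, y)) (zZ x)" using sample_eta[of x] by auto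
      moreover have "zZ x \<in> {1..N}" using x assms unfolding supp_ok_def by auto
      ultimately show "x \<in> (\<lambda>z. (s, z, a, y)) ` {1..N}" by blast
    qed
  qed (use assms in \<open>auto simp: supp_ok_def inj_on_def\<close>)
  finally show ?thesis by simp
qed

lemma B6b:
  assumes "supp_ok P N B X" "set_pmf P \<inter> {x. sS x = s} \<noteq> {}"
  shows "pmf (map_pmf aA (cond_pmf P {x. sS x = s})) a
     = (\<Sum>z\<in>{1..N}. \<Sum>y\<in>{1..B}. pmf P (s, z, a, y)) / measure P {x. sS x = s}"
proof -
  have "pmf (map_pmf aA (cond_pmf P {x. sS x = s})) a = measure (cond_pmf P {x. sS x = s}) (aA -` {a})" unfolding pmf_map ..
  also have "\<dots> = (\<Sum>j\<in>{1..N} \<times> {1..B}. pmf P ((\<lambda>(z, y). (s, z, a, y)) j)) / measure P {x. sS x = s}"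
  proof (rule meas_cond[OF assms(2)])
    show "aA -` {a} \<inter> {x. sS x = s} \<inter> set_pmf P \<subseteq> (\<lambda>(z, y). (s, z, a, y)) ` ({1..N} \<times> {1..B})"
    proof
      fix x assume x: "x \<in> aA -` {a} \<inter> {x. sS x = s} \<inter> set_pmf P"
      then have "x = (\<lambda>(z, y). (s, z, a, y)) (zZ x, yY x)" using sample_eta[of x] by auto
      moreover have "(zZ x, yY x) \<in> {1..N} \<times> {1..B}" using x assms unfolding supp_ok_def by auto
      ultimately show "x \<in> (\<lambda>(z, y). (s, z, a, y)) ` ({1..N} \<times> {1..B})" by blast
    qed
  qed (use assms in \<open>auto simp: supp_ok_def inj_on_def\<close>)
  finally show ?thesis by (simp add: sum2)
qed

lemma B6c:
  assumes "supp_ok P N B X" "set_pmf P \<inter> {x. sS x = s} \<noteq> {}"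
  shows "pmf (map_pmf yY (cond_pmf P {x. sS x = s})) y
     = (\<Sum>z\<in>{1..N}. \<Sum>a\<in>X. pmf P (s, z, a, y)) / measure P {x. sS x = s}"
proof -
  have "pmf (map_pmf yY (cond_pmf P {x. sS x = s})) y = measure (cond_pmf P {x. sS x = s}) (yY -` {y})" unfolding pmf_map ..
  also have "\<dots> = (\<Sum>j\<in>{1..N} \<times> X. pmf P ((\<lambda>(z, a). (s, z, a, y)) j)) / measure P {x. sS x = s}"
  proof (rule meas_cond[OF assms(2)])
    show "yY -` {y} \<inter> {x. sS x = s} \<inter> set_pmf P \<subseteq> (\<lambda>(z, a). (s, z, a, y)) ` ({1..N} \<times> X)"
    proof
      fix x assume x: "x \<in> yY -` {y} \<inter> {x. sS x = s} \<inter> set_pmf P"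
      then have "x = (\<lambda>(z, a). (s, z, a, y)) (zZ x, aA x)" using sample_eta[of x] by auto
      moreover have "(zZ x, aA x) \<in> {1..N} \<times> X" using x assms unfolding supp_ok_def by auto
      ultimately show "x \<in> (\<lambda>(z, a). (s, z, a, y)) ` ({1..N} \<times> X)" by blast
    qed
  qed (use assms in \<open>auto simp: supp_ok_def inj_on_def\<close>)
  finally show ?thesis by (simp add: sum2)
qed

lemma B7a:
  assumes "set_pmf P \<inter> {x. sS x = s \<and> yY x = y} \<noteq> {}"
  shows "pmf (map_pmf (\<lambda>x. (aA x, zZ x)) (cond_pmf P {x. sS x = s \<and> yY x = y})) (a, z)
     = pmf P (s, z, a, y) / measure P {x. sS x = s \<and> yY x = y}"
proof -
  have "pmf (map_pmf (\<lambda>x. (aA x, zZ x)) (cond_pmf P {x. sS x = s \<and> yY x = y})) (a, z) = measure (cond_pmf P {x. sS x = s \<and> yY x = y}) ((\<lambda>x. (aA x, zZ x)) -` {(a, z)})" unfolding pmf_map ..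
  also have "\<dots> = (\<Sum>j\<in>{a}. pmf P ((\<lambda>a. (s, z, a, y)) j)) / measure P {x. sS x = s \<and> yY x = y}"
  proof (rule meas_cond[OF assms(1)])
    show "(\<lambda>x. (aA x, zZ x)) -` {(a, z)} \<inter> {x. sS x = s \<and> yY x = y} \<inter> set_pmf P \<subseteq> (\<lambda>a. (s, z, a, y)) ` {a}"
    proof
      fix x assume x: "x \<in> (\<lambda>x. (aA x, zZ x)) -` {(a, z)} \<inter> {x. sS x = s \<and> yY x = y} \<inter> set_pmf P"
      then have "x = (s, z, a, y)" using sample_eta[of x] by auto
      then show "x \<in> (\<lambda>a. (s, z, a, y)) ` {a}" by blast
    qed
  qed auto
  finally show ?thesis by simp
qed

lemma B7b:
  assumes "supp_ok P N B X" "set_pmf P \<inter> {x. sS x = s \<and> yY x = y} \<noteq> {}"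
  shows "pmf (map_pmf aA (cond_pmf P {x. sS x = s \<and> yY x = y})) a
     = (\<Sum>z\<in>{1..N}. pmf P (s, z, a, y)) / measure P {x. sS x = s \<and> yY x = y}"
proof -
  have "pmf (map_pmf aA (cond_pmf P {x. sS x = s \<and> yY x = y})) a = measure (cond_pmf P {x. sS x = s \<and> yY x = y}) (aA -` {a})" unfolding pmf_map ..
  also have "\<dots> = (\<Sum>z\<in>{1..N}. pmf P ((\<lambda>z. (s, z, a, y)) z)) / measure P {x. sS x = s \<and> yY x = y}"
  proof (rule meas_cond[OF assms(2)])
    show "aA -` {a} \<inter> {x. sS x = s \<and> yY x = y} \<inter> set_pmf P \<subseteq> (\<lambda>z. (s, z, a, y)) ` {1..N}"
    proof
      fix x assume x: "x \<in> aA -` {a} \<inter> {x. sS x = s \<and> yY x = y} \<inter> set_pmf P"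
      then have "x = (\<lambda>z. (s, z, a, y)) (zZ x)" using sample_eta[of x] by auto
      moreover have "zZ x \<in> {1..N}" using x assms unfolding supp_ok_def by auto
      ultimately show "x \<in> (\<lambda>z. (s, z, a, y)) ` {1..N}" by blast
    qed
  qed (use assms in \<open>auto simp: supp_ok_def inj_on_def\<close>)
  finally show ?thesis by simp
qed

lemma B7c:
  assumes "supp_ok P N B X" "set_pmf P \<inter> {x. sS x = s \<and> yY x = y} \<noteq> {}"
  shows "pmf (map_pmf zZ (cond_pmf P {x. sS x = s \<and> yY x = y})) z
     = (\<Sum>a\<in>X. pmf P (s, z, a, y)) / measure P {x. sS x = s \<and> yY x = y}"
proof -
  have "pmf (map_pmf zZ (cond_pmf P {x. sS x = s \<and> yY x = y})) z = measure (cond_pmf P {x. sS x = s \<and> yY x = y}) (zZ -` {z})" unfolding pmf_map ..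
  also have "\<dots> = (\<Sum>a\<in>X. pmf P ((\<lambda>a. (s, z, a, y)) a)) / measure P {x. sS x = s \<and> yY x = y}"
  proof (rule meas_cond[OF assms(2)])
    show "zZ -` {z} \<inter> {x. sS x = s \<and> yY x = y} \<inter> set_pmf P \<subseteq> (\<lambda>a. (s, z, a, y)) ` X"
    proof
      fix x assume x: "x \<in> zZ -` {z} \<inter> {x. sS x = s \<and> yY x = y} \<inter> set_pmf P"
      then have "x = (\<lambda>a. (s, z, a, y)) (aA x)" using sample_eta[of x] by auto
      moreover have "aA x \<in> X" using x assms unfolding supp_ok_def by auto
      ultimately show "x \<in> (\<lambda>a. (s, z, a, y)) ` X" by blast
    qed
  qed (use assms in \<open>auto simp: supp_ok_def inj_on_def\<close>)
  finally show ?thesis by simp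
qed

lemma ne_of_meas: "measure (measure_pmf P) E > 0 \<Longrightarrow> set_pmf P \<inter> E \<noteq> {}"
  using measure_Int_set_pmf[of P E] by (auto simp: Int_commute)

lemma per_s:
  assumes ok: "supp_ok P N B X" and s: "s \<in> sS ` set_pmf P"
  and cnd: "\<And>y. y \<in> {1..B} \<Longrightarrow> set_pmf P \<inter> {x. sS x = s \<and> yY x = y} \<noteq> {} \<Longrightarrow>
      mutual_info (map_pmf (\<lambda>x. (aA x, zZ x)) (cond_pmf P {x. sS x = s \<and> yY x = y})) = 0"
  shows "JSD_div P N X s \<le> mutual_info (map_pmf (\<lambda>x. (aA x, yY x)) (cond_pmf P {x. sS x = s}))"
proof -
  have finX: "finite X" using ok unfolding supp_ok_def by simp
  let ?f = "\<lambda>z a y. pmf P (s, z, a, y)"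
  let ?fZ = "\<lambda>z. \<Sum>a\<in>X. \<Sum>y\<in>{1..B}. ?f z a y"
  let ?fA = "\<lambda>a. \<Sum>z\<in>{1..N}. \<Sum>y\<in>{1..B}. ?f z a y"
  let ?fY = "\<lambda>y. \<Sum>z\<in>{1..N}. \<Sum>a\<in>X. ?f z a y"
  let ?fZA = "\<lambda>z a. \<Sum>y\<in>{1..B}. ?f z a y"
  let ?fAY = "\<lambda>a y. \<Sum>z\<in>{1..N}. ?f z a y"
  let ?fZY = "\<lambda>z y. \<Sum>a\<in>X. ?f z a y"
  let ?c = "\<Sum>z\<in>{1..N}. \<Sum>a\<in>X. \<Sum>y\<in>{1..B}. ?f z a y"
  have ne: "set_pmf P \<inter> {x. sS x = s} \<noteq> {}" using s by auto
  have mc: "measure P {x. sS x = s} = ?c" by (rule B1[OF ok])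
  have cpos: "?c > 0" unfolding mc[symmetric] using s by (auto intro: measure_pmf_posI)
  have nnZA: "?fZA z a \<ge> 0" for z a by (intro sum_nonneg) simp
  have le_Z: "?fZA z a \<le> ?fZ z" if "a \<in> X" for z a
    using that finX by (intro member_le_sum[where f = "?fZA z"] nnZA) auto
  have mix: "mixpol P N s a = ?fA a / ?c" if a: "a \<in> X" for a
  proof -
    have "mixpol P N s a = (\<Sum>z\<in>{1..N}. ?fZA z a / ?c)" unfolding mixpol_def
    proof (rule sum.cong[OF refl])
      fix z assume z: "z \<in> {1..N}"
      have w: "wt P s z = ?fZ z / ?c" using B2[OF ok ne, of z] mc by simp
      show "wt P s z * pol P s z a = ?fZA z a / ?c"
      proof (cases "?fZ z = 0")
        case True
        then have "?fZA z a = 0" using le_Z[OF a, of z] nnZA[of z a] by linarith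
        then show ?thesis using w True by simp
      next
        case False
        then have pos: "?fZ z > 0" using sum_nonneg[of X "\<lambda>a. ?fZA z a"] nnZA by (metis (no_types, lifting) less_eq_real_def)
        have m: "measure P {x. sS x = s \<and> zZ x = z} = ?fZ z" by (rule B3[OF ok])
        have ne2: "set_pmf P \<inter> {x. sS x = s \<and> zZ x = z} \<noteq> {}" using pos m by (intro ne_of_meas) simp
        have "pol P s z a = ?fZA z a / ?fZ z" using B4[OF ok ne2, of a] m by simp
        then show ?thesis using w False by simp
      qed
    qed
    also have "\<dots> = ?fA a / ?c" by (simp add: sum_divide_distrib)
    finally show ?thesis .
  qed
  have jsd: "JSD_div P N X s = (\<Sum>z\<in>{1..N}. (?fZ z / ?c) * (\<Sum>a\<in>X. (?fZA z a / ?fZ z) * ln ((?fZA z a / ?fZ z) / (?fA a / ?c))))"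
    unfolding JSD_div_def
  proof (rule sum.cong[OF refl])
    fix z assume z: "z \<in> {1..N}"
    have w: "wt P s z = ?fZ z / ?c" using B2[OF ok ne, of z] mc by simp
    show "wt P s z * kl_on X (pol P s z) (mixpol P N s) = (?fZ z / ?c) * (\<Sum>a\<in>X. (?fZA z a / ?fZ z) * ln ((?fZA z a / ?fZ z) / (?fA a / ?c)))"
    proof (cases "?fZ z = 0")
      case True
      then show ?thesis using w by simp
    next
      case False
      then have pos: "?fZ z > 0" using sum_nonneg[of X "\<lambda>a. ?fZA z a"] nnZA by (metis (no_types, lifting) less_eq_real_def)
      have m: "measure P {x. sS x = s \<and> zZ x = z} = ?fZ z" by (rule B3[OF ok])
      have ne2: "set_pmf P \<inter> {x. sS x = s \<and> zZ x = z} \<noteq> {}" using pos m by (intro ne_of_meas) simp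
      have "pol P s z a = ?fZA z a / ?fZ z" for a using B4[OF ok ne2, of a] m by simp
      then show ?thesis unfolding w kl_on_def using mix by (simp cong: sum.cong)
    qed
  qed
  let ?R = "map_pmf (\<lambda>x. (aA x, yY x)) (cond_pmf P {x. sS x = s})"
  have setR: "set_pmf ?R \<subseteq> X \<times> {1..B}" using ok ne unfolding supp_ok_def by (auto simp: set_cond_pmf)
  have fstR: "map_pmf fst ?R = map_pmf aA (cond_pmf P {x. sS x = s})" by (simp add: map_pmf_comp)
  have sndR: "map_pmf snd ?R = map_pmf yY (cond_pmf P {x. sS x = s})" by (simp add: map_pmf_comp)
  have miay: "mutual_info ?R = (\<Sum>a\<in>X. \<Sum>y\<in>{1..B}. (?fAY a y / ?c) * ln ((?fAY a y / ?c) / ((?fA a / ?c) * (?fY y / ?c))))"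
  proof -
    have "mutual_info ?R = (\<Sum>(u, v)\<in>X \<times> {1..B}. pmf ?R (u, v) * ln (pmf ?R (u, v) / (pmf (map_pmf fst ?R) u * pmf (map_pmf snd ?R) v)))"
      using finX by (intro mi_superset setR) simp
    also have "\<dots> = (\<Sum>a\<in>X. \<Sum>y\<in>{1..B}. pmf ?R (a, y) * ln (pmf ?R (a, y) / (pmf (map_pmf fst ?R) a * pmf (map_pmf snd ?R) y)))"
      by (simp only: sum2 prod.case)
    also have "\<dots> = (\<Sum>a\<in>X. \<Sum>y\<in>{1..B}. (?fAY a y / ?c) * ln ((?fAY a y / ?c) / ((?fA a / ?c) * (?fY y / ?c))))"
      by (intro sum.cong refl) (simp only: fstR sndR B6a[OF ok ne] B6b[OF ok ne] B6c[OF ok ne] mc)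
    finally show ?thesis .
  qed
  have cond': "(\<Sum>a\<in>X. \<Sum>z\<in>{1..N}. (?f z a y / ?fY y) * ln ((?f z a y / ?fY y) / ((?fAY a y / ?fY y) * (?fZY z y / ?fY y)))) = 0"
    if y: "y \<in> {1..B}" and pos: "?fY y > 0" for y
  proof -
    have m: "measure P {x. sS x = s \<and> yY x = y} = ?fY y" by (rule B3y[OF ok])
    have ne3: "set_pmf P \<inter> {x. sS x = s \<and> yY x = y} \<noteq> {}" using pos m by (intro ne_of_meas) simp
    let ?Q = "map_pmf (\<lambda>x. (aA x, zZ x)) (cond_pmf P {x. sS x = s \<and> yY x = y})"
    have setQ: "set_pmf ?Q \<subseteq> X \<times> {1..N}" using ok ne3 unfolding supp_ok_def by (auto simp: set_cond_pmf)
    have fstQ: "map_pmf fst ?Q = map_pmf aA (cond_pmf P {x. sS x = s \<and> yY x = y})" by (simp add: map_pmf_comp)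
    have sndQ: "map_pmf snd ?Q = map_pmf zZ (cond_pmf P {x. sS x = s \<and> yY x = y})" by (simp add: map_pmf_comp)
    have "mutual_info ?Q = (\<Sum>a\<in>X. \<Sum>z\<in>{1..N}. (?f z a y / ?fY y) * ln ((?f z a y / ?fY y) / ((?fAY a y / ?fY y) * (?fZY z y / ?fY y))))"
    proof -
      have "mutual_info ?Q = (\<Sum>(u, v)\<in>X \<times> {1..N}. pmf ?Q (u, v) * ln (pmf ?Q (u, v) / (pmf (map_pmf fst ?Q) u * pmf (map_pmf snd ?Q) v)))"
        using finX by (intro mi_superset setQ) simp
      also have "\<dots> = (\<Sum>a\<in>X. \<Sum>z\<in>{1..N}. pmf ?Q (a, z) * ln (pmf ?Q (a, z) / (pmf (map_pmf fst ?Q) a * pmf (map_pmf snd ?Q) z)))"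
        by (simp only: sum2 prod.case)
      also have "\<dots> = (\<Sum>a\<in>X. \<Sum>z\<in>{1..N}. (?f z a y / ?fY y) * ln ((?f z a y / ?fY y) / ((?fAY a y / ?fY y) * (?fZY z y / ?fY y))))"
        by (intro sum.cong refl) (simp only: fstQ sndQ B7a[OF ne3] B7b[OF ok ne3] B7c[OF ok ne3] m)
      finally show ?thesis .
    qed
    then show ?thesis using cnd[OF y ne3] by simp
  qed
  have "(\<Sum>z\<in>{1..N}. (?fZ z / ?c) * (\<Sum>a\<in>X. (?fZA z a / ?fZ z) * ln ((?fZA z a / ?fZ z) / (?fA a / ?c))))
     \<le> (\<Sum>a\<in>X. \<Sum>y\<in>{1..B}. (?fAY a y / ?c) * ln ((?fAY a y / ?c) / ((?fA a / ?c) * (?fY y / ?c))))"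
    by (rule core[of "{1..N}" X "{1..B}" ?f, OF _ finX _ _ cpos cond']) auto
  then show ?thesis unfolding jsd miay .
qed

lemma pmf_bounded_integrable:
  fixes f :: "'a \<Rightarrow> real"
  assumes "\<And>x. x \<in> set_pmf M \<Longrightarrow> \<bar>f x\<bar> \<le> K"
  shows "integrable (measure_pmf M) f"
  by (rule measure_pmf.integrable_const_bound[where B = K]) (use assms in \<open>auto simp: AE_measure_pmf_iff\<close>)

lemma div_bounds:
  assumes ok: "supp_ok P N B X" and s: "s \<in> sS ` set_pmf P"
  shows "0 \<le> JSD_div P N X s" "0 \<le> D2_div P N X s" "D2_div P N X s \<le> 4 * JSD_div P N X s"
        "0 \<le> DTV_div P N X s" "DTV_div P N X s \<le> JSD_div P N X s"
proof -
  have finX: "finite X" using ok unfolding supp_ok_def by simp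
  let ?Q = "cond_pmf P {x. sS x = s}"
  have ne: "set_pmf P \<inter> {x. sS x = s} \<noteq> {}" using s by auto
  have setQ: "set_pmf ?Q = set_pmf P \<inter> {x. sS x = s}" using ne by (simp add: set_cond_pmf)
  have wt_nn: "wt P s i \<ge> 0" for i unfolding wt_def by simp
  have pol_nn: "pol P s i a \<ge> 0" for i a unfolding pol_def by simp
  have mix_nn: "mixpol P N s a \<ge> 0" for a unfolding mixpol_def using wt_nn pol_nn by (intro sum_nonneg mult_nonneg_nonneg) auto
  have wt_sum: "(\<Sum>i\<in>{1..N}. wt P s i) = 1" unfolding wt_def
    by (rule sum_pmf_eq_1) (use ok setQ in \<open>auto simp: supp_ok_def\<close>)
  have wt_in: "i \<in> {1..N}" and pol_sum: "(\<Sum>a\<in>X. pol P s i a) = 1" if "wt P s i \<noteq> 0" for i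
  proof -
    have "i \<in> set_pmf (map_pmf zZ ?Q)" using that unfolding wt_def by (simp add: set_pmf_eq)
    then obtain x where x: "x \<in> set_pmf P" "sS x = s" "zZ x = i" using setQ by auto
    then show "i \<in> {1..N}" using ok unfolding supp_ok_def by auto
    have ne2: "set_pmf P \<inter> {x. sS x = s \<and> zZ x = i} \<noteq> {}" using x by auto
    show "(\<Sum>a\<in>X. pol P s i a) = 1" unfolding pol_def
      by (rule sum_pmf_eq_1[OF finX]) (use ok ne2 in \<open>auto simp: supp_ok_def set_cond_pmf\<close>)
  qed
  have mix_sum: "(\<Sum>a\<in>X. mixpol P N s a) = 1"
  proof -
    have "(\<Sum>a\<in>X. mixpol P N s a) = (\<Sum>i\<in>{1..N}. wt P s i * (\<Sum>a\<in>X. pol P s i a))"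
      unfolding mixpol_def sum_distrib_left by (rule sum.swap)
    also have "\<dots> = (\<Sum>i\<in>{1..N}. wt P s i)"
    proof (intro sum.cong refl)
      fix i show "wt P s i * (\<Sum>a\<in>X. pol P s i a) = wt P s i"
        using pol_sum[of i] by (cases "wt P s i = 0") auto
    qed
    finally show ?thesis using wt_sum by simp
  qed
  have mix_ge: "wt P s i * pol P s i a \<le> mixpol P N s a" if "i \<in> {1..N}" for i a
    unfolding mixpol_def using that wt_nn pol_nn
    by (intro member_le_sum[where f = "\<lambda>i. wt P s i * pol P s i a"] mult_nonneg_nonneg) auto
  have hyp: "finite X" "\<And>a. a \<in> X \<Longrightarrow> pol P s i a \<ge> 0" "\<And>a. a \<in> X \<Longrightarrow> mixpol P N s a \<ge> 0"
    "sum (pol P s i) X = 1" "sum (mixpol P N s) X = 1" "\<And>a. a \<in> X \<Longrightarrow> mixpol P N s a = 0 \<Longrightarrow> pol P s i a = 0"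
    if "wt P s i \<noteq> 0" for i
  proof -
    show "finite X" by (rule finX)
    show "\<And>a. a \<in> X \<Longrightarrow> pol P s i a \<ge> 0" by (rule pol_nn)
    show "\<And>a. a \<in> X \<Longrightarrow> mixpol P N s a \<ge> 0" by (rule mix_nn)
    show "sum (pol P s i) X = 1" using pol_sum[OF that] by simp
    show "sum (mixpol P N s) X = 1" using mix_sum by simp
    show "pol P s i a = 0" if "a \<in> X" "mixpol P N s a = 0" for a
    proof -
      have "wt P s i * pol P s i a \<le> 0" using mix_ge[OF wt_in[OF \<open>wt P s i \<noteq> 0\<close>], of a] that by simp
      moreover have "wt P s i > 0" using wt_nn[of i] \<open>wt P s i \<noteq> 0\<close> by linarith
      ultimately show ?thesis using pol_nn[of i a] by (simp add: mult_le_0_iff)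
    qed
  qed
  have kl_nn: "0 \<le> kl_on X (pol P s i) (mixpol P N s)" if "wt P s i \<noteq> 0" for i
    by (rule order_trans[OF _ kl_hell[OF hyp[OF that]]]) (intro sum_nonneg zero_le_power2)
  show "0 \<le> JSD_div P N X s" unfolding JSD_div_def
  proof (intro sum_nonneg)
    fix i show "0 \<le> wt P s i * kl_on X (pol P s i) (mixpol P N s)"
      using kl_nn[of i] wt_nn[of i] by (cases "wt P s i = 0") auto
  qed
  show "0 \<le> D2_div P N X s" unfolding D2_div_def
  proof (rule sum_nonneg)
    fix i show "0 \<le> wt P s i * (\<Sum>a\<in>X. (pol P s i a - mixpol P N s a)^2)"
      by (rule mult_nonneg_nonneg[OF wt_nn sum_nonneg]) simp
  qed
  show "0 \<le> DTV_div P N X s" unfolding DTV_div_def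
  proof (rule sum_nonneg)
    fix i show "0 \<le> wt P s i * (tv_on X (pol P s i) (mixpol P N s))^2"
      by (rule mult_nonneg_nonneg[OF wt_nn zero_le_power2])
  qed
  have "D2_div P N X s \<le> (\<Sum>i\<in>{1..N}. 4 * (wt P s i * kl_on X (pol P s i) (mixpol P N s)))"
    unfolding D2_div_def
  proof (rule sum_mono)
    fix i assume "i \<in> {1..N}"
    show "wt P s i * (\<Sum>a\<in>X. (pol P s i a - mixpol P N s a)^2) \<le> 4 * (wt P s i * kl_on X (pol P s i) (mixpol P N s))"
    proof (cases "wt P s i = 0")
      case False
      have "wt P s i * (\<Sum>a\<in>X. (pol P s i a - mixpol P N s a)^2) \<le> wt P s i * (4 * kl_on X (pol P s i) (mixpol P N s))"
        by (rule mult_left_mono[OF d2_kl(1)[OF hyp[OF False]] wt_nn])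
      then show ?thesis by (simp add: algebra_simps)
    qed simp
  qed
  then show "D2_div P N X s \<le> 4 * JSD_div P N X s" unfolding JSD_div_def by (simp add: sum_distrib_left)
  show "DTV_div P N X s \<le> JSD_div P N X s"
    unfolding DTV_div_def JSD_div_def
  proof (rule sum_mono)
    fix i assume "i \<in> {1..N}"
    show "wt P s i * (tv_on X (pol P s i) (mixpol P N s))^2 \<le> wt P s i * kl_on X (pol P s i) (mixpol P N s)"
    proof (cases "wt P s i = 0")
      case False
      show ?thesis by (rule mult_left_mono[OF d2_kl(2)[OF hyp[OF False]] wt_nn])
    qed simp
  qed
qed

theorem theorem4:
  "\<exists>C::real. \<forall>(P::sample pmf) (N::nat) (B::nat) (X::nat set).
     finite X \<and>
     (\<forall>x\<in>set_pmf P. zZ x \<in> {1..N} \<and> aA x \<in> X \<and> yY x \<in> {1..B}) \<and>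
     mi_A_Z_given_YS P = 0
     \<longrightarrow> Expr P (JSD_div P N X) \<le> C * mi_A_Y_given_S P
       \<and> Expr P (D2_div P N X) \<le> C * mi_A_Y_given_S P
       \<and> Expr P (DTV_div P N X) \<le> C * mi_A_Y_given_S P"
proof (intro exI[of _ 4] allI impI, elim conjE)
  fix P :: "sample pmf" and N B :: nat and X :: "nat set"
  assume finX: "finite X" and sup: "\<forall>x\<in>set_pmf P. zZ x \<in> {1..N} \<and> aA x \<in> X \<and> yY x \<in> {1..B}"
    and z: "mi_A_Z_given_YS P = 0"
  have ok: "supp_ok P N B X" unfolding supp_ok_def using finX sup by simp
  define Fs where "Fs = (\<lambda>s. mutual_info (map_pmf (\<lambda>x. (aA x, yY x)) (cond_pmf P {x. sS x = s})))"
  define G where "G = (\<lambda>(s, y). mutual_info (map_pmf (\<lambda>x. (aA x, zZ x)) (cond_pmf P {x. sS x = s \<and> yY x = y})))"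
  define K where "K = real (card (X \<times> {1..B}))"
  define K2 where "K2 = real (card (X \<times> {1..N}))"
  have Fs_b: "0 \<le> Fs s \<and> Fs s \<le> K" if s: "s \<in> sS ` set_pmf P" for s
  proof -
    have ne: "set_pmf P \<inter> {x. sS x = s} \<noteq> {}" using s by auto
    have sub: "set_pmf (map_pmf (\<lambda>x. (aA x, yY x)) (cond_pmf P {x. sS x = s})) \<subseteq> X \<times> {1..B}"
      using sup ne by (auto simp: set_cond_pmf)
    have fin: "finite (set_pmf (map_pmf (\<lambda>x. (aA x, yY x)) (cond_pmf P {x. sS x = s})))"
      by (rule finite_subset[OF sub]) (simp add: finX)
    have "real (card (set_pmf (map_pmf (\<lambda>x. (aA x, yY x)) (cond_pmf P {x. sS x = s})))) \<le> K"
      unfolding K_def using sub finX by (intro of_nat_mono card_mono) auto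
    then show ?thesis unfolding Fs_def using mi_nonneg[OF fin] mi_ub[OF fin] by linarith
  qed
  have G_b: "0 \<le> G sy \<and> G sy \<le> K2" if sy: "sy \<in> (\<lambda>x. (sS x, yY x)) ` set_pmf P" for sy
  proof -
    obtain s y where sy': "sy = (s, y)" by (cases sy)
    have ne: "set_pmf P \<inter> {x. sS x = s \<and> yY x = y} \<noteq> {}" using sy sy' by auto
    have sub: "set_pmf (map_pmf (\<lambda>x. (aA x, zZ x)) (cond_pmf P {x. sS x = s \<and> yY x = y})) \<subseteq> X \<times> {1..N}"
      using sup ne by (auto simp: set_cond_pmf)
    have fin: "finite (set_pmf (map_pmf (\<lambda>x. (aA x, zZ x)) (cond_pmf P {x. sS x = s \<and> yY x = y})))"
      by (rule finite_subset[OF sub]) (simp add: finX)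
    have "real (card (set_pmf (map_pmf (\<lambda>x. (aA x, zZ x)) (cond_pmf P {x. sS x = s \<and> yY x = y})))) \<le> K2"
      unfolding K2_def using sub finX by (intro of_nat_mono card_mono) auto
    then show ?thesis unfolding G_def sy' using mi_nonneg[OF fin] mi_ub[OF fin] by simp
  qed
  have intG: "integrable (measure_pmf (map_pmf (\<lambda>x. (sS x, yY x)) P)) G"
    by (rule pmf_bounded_integrable[where K = K2]) (use G_b in \<open>auto simp: abs_le_iff\<close>)
  have "integral\<^sup>L (measure_pmf (map_pmf (\<lambda>x. (sS x, yY x)) P)) G = 0"
    using z unfolding mi_A_Z_given_YS_def G_def .
  then have "AE sy in measure_pmf (map_pmf (\<lambda>x. (sS x, yY x)) P). G sy = 0"
    using integral_nonneg_eq_0_iff_AE[OF intG] G_b by (auto simp: AE_measure_pmf_iff)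
  then have G0: "G sy = 0" if "sy \<in> (\<lambda>x. (sS x, yY x)) ` set_pmf P" for sy
    using that by (auto simp: AE_measure_pmf_iff)
  have jsd_le: "JSD_div P N X s \<le> Fs s" if s: "s \<in> sS ` set_pmf P" for s
    unfolding Fs_def
  proof (rule per_s[OF ok s])
    fix y assume y: "y \<in> {1..B}" and ne: "set_pmf P \<inter> {x. sS x = s \<and> yY x = y} \<noteq> {}"
    then have "(s, y) \<in> (\<lambda>x. (sS x, yY x)) ` set_pmf P" by force
    then show "mutual_info (map_pmf (\<lambda>x. (aA x, zZ x)) (cond_pmf P {x. sS x = s \<and> yY x = y})) = 0"
      using G0 unfolding G_def by auto
  qed
  let ?M = "measure_pmf (map_pmf sS P)"
  have intF: "integrable ?M Fs"
    by (rule pmf_bounded_integrable[where K = K]) (use Fs_b in \<open>auto simp: abs_le_iff\<close>)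
  have intF4: "integrable ?M (\<lambda>s. 4 * Fs s)" using intF by simp
  have intJ: "integrable ?M (JSD_div P N X)"
  proof (rule pmf_bounded_integrable[where K = K])
    fix s assume "s \<in> set_pmf (map_pmf sS P)"
    then have s: "s \<in> sS ` set_pmf P" by simp
    show "\<bar>JSD_div P N X s\<bar> \<le> K" using div_bounds(1)[OF ok s] jsd_le[OF s] Fs_b[OF s] by simp
  qed
  have intD2: "integrable ?M (D2_div P N X)"
  proof (rule pmf_bounded_integrable[where K = "4 * K"])
    fix s assume "s \<in> set_pmf (map_pmf sS P)"
    then have s: "s \<in> sS ` set_pmf P" by simp
    show "\<bar>D2_div P N X s\<bar> \<le> 4 * K" using div_bounds(2,3)[OF ok s] jsd_le[OF s] Fs_b[OF s] by simp
  qed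
  have intTV: "integrable ?M (DTV_div P N X)"
  proof (rule pmf_bounded_integrable[where K = K])
    fix s assume "s \<in> set_pmf (map_pmf sS P)"
    then have s: "s \<in> sS ` set_pmf P" by simp
    show "\<bar>DTV_div P N X s\<bar> \<le> K" using div_bounds(4,5)[OF ok s] jsd_le[OF s] Fs_b[OF s] by simp
  qed
  have miY: "mi_A_Y_given_S P = integral\<^sup>L ?M Fs" unfolding mi_A_Y_given_S_def Fs_def ..
  have m4: "integral\<^sup>L ?M (\<lambda>s. 4 * Fs s) = 4 * mi_A_Y_given_S P" unfolding miY by simp
  have "Expr P (JSD_div P N X) \<le> integral\<^sup>L ?M (\<lambda>s. 4 * Fs s)" unfolding Expr_def
  proof (rule integral_mono_AE[OF intJ intF4])
    show "AE s in ?M. JSD_div P N X s \<le> 4 * Fs s"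
      unfolding AE_measure_pmf_iff using jsd_le Fs_b by fastforce
  qed
  moreover have "Expr P (D2_div P N X) \<le> integral\<^sup>L ?M (\<lambda>s. 4 * Fs s)" unfolding Expr_def
  proof (rule integral_mono_AE[OF intD2 intF4])
    show "AE s in ?M. D2_div P N X s \<le> 4 * Fs s"
      unfolding AE_measure_pmf_iff using jsd_le div_bounds(3)[OF ok] by fastforce
  qed
  moreover have "Expr P (DTV_div P N X) \<le> integral\<^sup>L ?M (\<lambda>s. 4 * Fs s)" unfolding Expr_def
  proof (rule integral_mono_AE[OF intTV intF4])
    show "AE s in ?M. DTV_div P N X s \<le> 4 * Fs s"
      unfolding AE_measure_pmf_iff using jsd_le Fs_b div_bounds(5)[OF ok] by fastforce
  qed
  ultimately show "Expr P (JSD_div P N X) \<le> 4 * mi_A_Y_given_S P \<and>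
       Expr P (D2_div P N X) \<le> 4 * mi_A_Y_given_S P \<and>
       Expr P (DTV_div P N X) \<le> 4 * mi_A_Y_given_S P" unfolding m4 by simp
qed

end
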